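(* Fix an iteration $k$, a current policy $\pi_k$, and $M_k:\mathcal Q\to(0,\infty)$. Assume $1-\rho^+(q)-\rho^-(q)>0$ and $1-\hat\rho^+(q)-\hat\rho^-(q)>0$ for all $q$. Define the corrected reward with estimated rates $\hat r(q,o,\xi)=\frac{\tilde r(q,o,\xi)-\hat\rho^+(q)}{1-\hat\rho^+(q)-\hat\rho^-(q)}$, the surrogate \[ \hat L_{\pi_k}(\pi(\cdot\mid q))=\frac{\mathbb E_{o\sim\pi(\cdot\mid q)}\mathbb E_{\xi}[\hat r(q,o,\xi)]-\mathbb E_{o\sim\pi_k(\cdot\mid q)}\mathbb E_{\xi}[\hat r(q,o,\xi)]}{M_k(q)}, \] and $M_k'(q)=\frac{1-\hat\rho^+(q)-\hat\rho^-(q)}{1-\rho^+(q)-\rho^-(q)}M_k(q)$. Then for every policy $\pi$, \[ \mathbb{E}_{q\sim\rho_{\mathcal Q}}\bigl[p_{\pi}(q)-p_{\pi_k}(q)\bigr] \ge \mathbb{E}_{q\sim\rho_{\mathcal Q}}\bigl[\hat L_{\pi_k}(\pi(\cdot\mid q))\bigr] -2\sqrt{\mathbb{E}_{q\sim\rho_{\mathcal Q}}\Bigl(\tfrac{1-M'_k(q)}{M'_k(q)}\Bigr)^2}\; \sqrt{\mathbb{E}_{q\sim\rho_{\mathcal Q}}\mathrm{TV}^2\bigl(\pi(\cdot\mid q)\,\|\,\pi_k(\cdot\mid q)\bigr)}. \]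
   Context: Setting: $\mathcal Q$ is a set of prompts with a probability distribution $\rho_{\mathcal Q}$; $\mathcal O$ is a countable set of responses; $r^*:\mathcal Q\times\mathcal O\to\{0,1\}$ is the true binary reward; a policy gives a distribution $\pi(\cdot\mid q)$ on $\mathcal O$; $p_\pi(q)=\mathbb E_{o\sim\pi(\cdot\mid q)}[r^*(q,o)]$. $\mathrm{TV}(P,Q)=\sup_A|P(A)-Q(A)|$. Noise model: true flip rates $\rho^+(q),\rho^-(q)\in[0,1]$; with $\xi\sim U[0,1]$ independent of $(q,o)$, $\tilde r(q,o,\xi)=(1-r^*(q,o))\mathbf 1_{\{\xi\le\rho^+(q)\}}+r^*(q,o)\mathbf 1_{\{\xi\le 1-\rho^-(q)\}}$. $\hat\rho^+(q),\hat\rho^-(q)$ are arbitrary (estimated) values used in place of the true flip rates; $\mathbb E_\xi$ is expectation over $\xi\sim U[0,1]$. *)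

theory Defs
  imports "HOL-Probability.Probability"
begin

definition tv_dist :: "'o pmf \<Rightarrow> 'o pmf \<Rightarrow> real" where
  "tv_dist P Q = (SUP A. \<bar>measure_pmf.prob P A - measure_pmf.prob Q A\<bar>)"

definition xi_expect :: "(real \<Rightarrow> real) \<Rightarrow> real" where
  "xi_expect f = (LBINT \<xi>:{0..1}. f \<xi>)"

definition noisy_reward ::
  "('q \<Rightarrow> 'o \<Rightarrow> real) \<Rightarrow> ('q \<Rightarrow> real) \<Rightarrow> ('q \<Rightarrow> real) \<Rightarrow> 'q \<Rightarrow> 'o \<Rightarrow> real \<Rightarrow> real" where
  "noisy_reward rstar rp rm q y \<xi> =
     (1 - rstar q y) * of_bool (\<xi> \<le> rp q) + rstar q y * of_bool (\<xi> \<le> 1 - rm q)"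

definition corrected_reward ::
  "('q \<Rightarrow> 'o \<Rightarrow> real) \<Rightarrow> ('q \<Rightarrow> real) \<Rightarrow> ('q \<Rightarrow> real) \<Rightarrow> ('q \<Rightarrow> real) \<Rightarrow> ('q \<Rightarrow> real)
     \<Rightarrow> 'q \<Rightarrow> 'o \<Rightarrow> real \<Rightarrow> real" where
  "corrected_reward rstar rp rm rph rmh q y \<xi> =
     (noisy_reward rstar rp rm q y \<xi> - rph q) / (1 - rph q - rmh q)"

definition success_prob :: "('q \<Rightarrow> 'o \<Rightarrow> real) \<Rightarrow> ('q \<Rightarrow> 'o pmf) \<Rightarrow> 'q \<Rightarrow> real" where
  "success_prob rstar \<pi> q = measure_pmf.expectation (\<pi> q) (\<lambda>y. rstar q y)"

definition surrogate ::
  "('q \<Rightarrow> 'o \<Rightarrow> real) \<Rightarrow> ('q \<Rightarrow> real) \<Rightarrow> ('q \<Rightarrow> real) \<Rightarrow> ('q \<Rightarrow> real) \<Rightarrow> ('q \<Rightarrow> real)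
     \<Rightarrow> ('q \<Rightarrow> real) \<Rightarrow> ('q \<Rightarrow> 'o pmf) \<Rightarrow> ('q \<Rightarrow> 'o pmf) \<Rightarrow> 'q \<Rightarrow> real" where
  "surrogate rstar rp rm rph rmh Mk \<pi>k \<pi> q =
     (measure_pmf.expectation (\<pi> q) (\<lambda>y. xi_expect (corrected_reward rstar rp rm rph rmh q y))
      - measure_pmf.expectation (\<pi>k q) (\<lambda>y. xi_expect (corrected_reward rstar rp rm rph rmh q y)))
     / Mk q"

definition Mprime ::
  "('q \<Rightarrow> real) \<Rightarrow> ('q \<Rightarrow> real) \<Rightarrow> ('q \<Rightarrow> real) \<Rightarrow> ('q \<Rightarrow> real) \<Rightarrow> ('q \<Rightarrow> real) \<Rightarrow> 'q \<Rightarrow> real" where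
  "Mprime rp rm rph rmh Mk q = (1 - rph q - rmh q) / (1 - rp q - rm q) * Mk q"

end

theory Submission
  imports Defs
begin

lemma xi_lemma:
  assumes "0 \<le> a" "a \<le> 1"
  shows "xi_expect (\<lambda>\<xi>. (of_bool (\<xi> \<le> a) - c) / d) = (a - c)/d"
proof -
  have eq: "(\<lambda>\<xi>. indicator {0..1} \<xi> *\<^sub>R ((of_bool (\<xi> \<le> a) - c) / d))
     = (\<lambda>\<xi>. (indicator {0..a} \<xi> - c * indicator {0..1} \<xi>) / d)"
    using assms by (auto simp: indicator_def fun_eq_iff)
  show ?thesis
  proof -
    have i1: "integrable lborel (indicator {0..a} :: real \<Rightarrow> real)"
      by (rule integrable_real_indicator) (use assms in auto)
    have i0: "integrable lborel (indicator {0..1} :: real \<Rightarrow> real)"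
      by (rule integrable_real_indicator) auto
    have i2: "integrable lborel (\<lambda>x::real. c * indicator {0..1} x :: real)"
      by (rule integrable_mult_right) (rule i0)
    have "(LBINT x. indicator {0..a} x - c * indicator {0..1} x) = a - c"
      using Bochner_Integration.integral_diff[OF i1 i2] assms by simp
    then show ?thesis unfolding xi_expect_def set_lebesgue_integral_def eq by simp
  qed
qed

lemma sq_bound:
  fixes X A B :: real
  assumes "0 \<le> X" "0 \<le> A" "0 \<le> B" "\<And>t. t > 0 \<Longrightarrow> X \<le> (t * A + B / t) / 2"
  shows "X \<le> sqrt A * sqrt B"
proof (cases "A > 0 \<and> B > 0")
  case True
  define t where "t = sqrt B / sqrt A"
  have tp: "t > 0" using True by (simp add: t_def)
  have a0: "sqrt A > 0" and b0: "sqrt B > 0" using True by auto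
  have sA: "A = sqrt A * sqrt A" and sB: "B = sqrt B * sqrt B" using assms(2,3) by simp_all
  have "t * A = sqrt B / sqrt A * (sqrt A * sqrt A)" unfolding t_def using sA by simp
  also have "\<dots> = sqrt A * sqrt B" using a0 by (simp add: field_simps)
  finally have e1: "t * A = sqrt A * sqrt B" .
  have "B / t = (sqrt B * sqrt B) / (sqrt B / sqrt A)" unfolding t_def using sB by simp
  also have "\<dots> = sqrt A * sqrt B" using a0 b0 by (simp add: field_simps)
  finally have e2: "B / t = sqrt A * sqrt B" .
  show ?thesis using assms(4)[OF tp] e1 e2 by simp
next
  case False
  show ?thesis
  proof (rule ccontr)
    assume "\<not> ?thesis"
    hence Xp: "X > 0" using False assms by auto
    show False
    proof (cases "A = 0")
      case True
      define t where "t = (B + 1) / X"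
      have tp: "t > 0" using Xp assms by (simp add: t_def)
      have "X \<le> B / t / 2" using assms(4)[OF tp] True by simp
      also have "\<dots> = B * X / (B + 1) / 2" using Xp assms by (simp add: t_def)
      also have "\<dots> < X" proof -
        have "0 \<le> B * X" using Xp assms(3) by simp
        then have h: "0 < B * X + X * 2" "0 < X * B + X * 2" "0 < B * X + 2 * X" using Xp by (auto simp: mult.commute)
        show ?thesis using Xp assms(3) h by (simp add: field_simps)
      qed
      finally show False by simp
    next
      case False2: False
      hence "B = 0" using False assms by auto
      define t where "t = X / (A + 1)"
      have tp: "t > 0" using Xp assms by (simp add: t_def)
      have "X \<le> t * A / 2" using assms(4)[OF tp] \<open>B = 0\<close> by simp
      also have "\<dots> = X * A / (A + 1) / 2" using Xp assms by (simp add: t_def)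
      also have "\<dots> < X" proof -
        have "0 \<le> X * A" using Xp assms(2) by simp
        then have h: "0 < A * X + X * 2" "0 < X * A + X * 2" "0 < A * X + 2 * X" using Xp by (auto simp: mult.commute)
        show ?thesis using Xp assms(2) h by (simp add: field_simps)
      qed
      finally show False by simp
    qed
  qed
qed

lemma tv_bound:
  fixes P Q :: "'o pmf" and f :: "'o \<Rightarrow> real"
  assumes "\<And>y. f y \<in> {0,1}"
  shows "\<bar>measure_pmf.expectation P f - measure_pmf.expectation Q f\<bar> \<le> tv_dist P Q"
proof -
  define S where "S = {y. f y = 1}"
  have f: "f = indicator S" using assms by (auto simp: S_def indicator_def fun_eq_iff)
  have "\<bar>measure_pmf.expectation P f - measure_pmf.expectation Q f\<bar>
      = \<bar>measure_pmf.prob P S - measure_pmf.prob Q S\<bar>"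
    unfolding f by simp
  also have "\<dots> \<le> tv_dist P Q" unfolding tv_dist_def
  proof (rule cSUP_upper)
    show "bdd_above (range (\<lambda>A. \<bar>measure_pmf.prob P A - measure_pmf.prob Q A\<bar>))"
    proof (rule bdd_aboveI[where M=1])
      fix x assume "x \<in> range (\<lambda>A. \<bar>measure_pmf.prob P A - measure_pmf.prob Q A\<bar>)"
      then obtain A where x: "x = \<bar>measure_pmf.prob P A - measure_pmf.prob Q A\<bar>" by blast
      have "measure_pmf.prob P A \<le> 1" "measure_pmf.prob Q A \<le> 1"
        "0 \<le> measure_pmf.prob P A" "0 \<le> measure_pmf.prob Q A"
        by (auto intro: measure_pmf.prob_le_1)
      then show "x \<le> 1" unfolding x by linarith
    qed
  qed simp
  finally show ?thesis .
qed

lemma tv_nonneg: "tv_dist P Q \<ge> 0"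
  by (rule order_trans[OF abs_ge_zero tv_bound[where f="\<lambda>_. 0"]]) auto

lemma xi_corr:
  assumes "rstar q y \<in> {0,1}" "rp q \<in> {0..1}" "rm q \<in> {0..1}"
  shows "xi_expect (corrected_reward rstar rp rm rph rmh q y)
    = (rp q - rph q + rstar q y * (1 - rp q - rm q)) / (1 - rph q - rmh q)"
proof (cases "rstar q y = 0")
  case True
  have "corrected_reward rstar rp rm rph rmh q y = (\<lambda>\<xi>. (of_bool (\<xi> \<le> rp q) - rph q) / (1 - rph q - rmh q))"
    by (simp add: fun_eq_iff corrected_reward_def noisy_reward_def True)
  then show ?thesis using xi_lemma[of "rp q"] assms True by simp
next
  case False
  hence T: "rstar q y = 1" using assms by auto
  have "corrected_reward rstar rp rm rph rmh q y = (\<lambda>\<xi>. (of_bool (\<xi> \<le> 1 - rm q) - rph q) / (1 - rph q - rmh q))"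
    by (simp add: fun_eq_iff corrected_reward_def noisy_reward_def T)
  then show ?thesis using xi_lemma[of "1 - rm q"] assms T by (simp add: field_simps)
qed

lemma exp_corr:
  fixes P :: "'o pmf"
  assumes "\<And>y. rstar q y \<in> {0,1}" "rp q \<in> {0..1}" "rm q \<in> {0..1}"
  shows "measure_pmf.expectation P (\<lambda>y. xi_expect (corrected_reward rstar rp rm rph rmh q y))
    = (rp q - rph q + measure_pmf.expectation P (rstar q) * (1 - rp q - rm q)) / (1 - rph q - rmh q)"
proof -
  have int: "integrable (measure_pmf P) (rstar q)"
  proof (rule measure_pmf.integrable_const_bound[where B=1])
    have "norm (rstar q x) \<le> 1" for x using assms(1)[of x] by auto
    then show "AE x in measure_pmf P. norm (rstar q x) \<le> 1" by (rule AE_I2)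
  qed simp
  have "measure_pmf.expectation P (\<lambda>y. xi_expect (corrected_reward rstar rp rm rph rmh q y))
     = measure_pmf.expectation P (\<lambda>y. (rp q - rph q + rstar q y * (1 - rp q - rm q)) / (1 - rph q - rmh q))"
    using xi_corr[of rstar q _ rp rm rph rmh] assms by simp
  also have "\<dots> = (rp q - rph q + measure_pmf.expectation P (rstar q) * (1 - rp q - rm q)) / (1 - rph q - rmh q)"
    using int by simp
  finally show ?thesis .
qed

lemma alg: fixes Dh D Mk a b c :: real
  shows "Dh \<noteq> 0 \<Longrightarrow> D \<noteq> 0 \<Longrightarrow> Mk \<noteq> 0 \<Longrightarrow> ((c + a*D)/Dh - (c+b*D)/Dh)/Mk = (a-b)/(Dh/D*Mk)"
  by (simp add: field_simps)

theorem theorem6: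
  fixes \<rho>Q :: "'q measure"
    and rstar :: "'q \<Rightarrow> 'o::countable \<Rightarrow> real"
    and rp rm rph rmh Mk :: "'q \<Rightarrow> real"
    and \<pi>k \<pi> :: "'q \<Rightarrow> 'o pmf"
  assumes "prob_space \<rho>Q"
    and "\<And>q y. rstar q y \<in> {0, 1}"
    and "\<And>q. rp q \<in> {0..1}" and "\<And>q. rm q \<in> {0..1}"
    and "\<And>q. 1 - rp q - rm q > 0"
    and "\<And>q. 1 - rph q - rmh q > 0"
    and "\<And>q. Mk q > 0"
    and "integrable \<rho>Q (\<lambda>q. success_prob rstar \<pi> q - success_prob rstar \<pi>k q)"
    and "integrable \<rho>Q (\<lambda>q. surrogate rstar rp rm rph rmh Mk \<pi>k \<pi> q)"
    and "integrable \<rho>Q (\<lambda>q. ((1 - Mprime rp rm rph rmh Mk q) / Mprime rp rm rph rmh Mk q)\<^sup>2)"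
    and "integrable \<rho>Q (\<lambda>q. (tv_dist (\<pi> q) (\<pi>k q))\<^sup>2)"
  shows "(\<integral>q. success_prob rstar \<pi> q - success_prob rstar \<pi>k q \<partial>\<rho>Q)
    \<ge> (\<integral>q. surrogate rstar rp rm rph rmh Mk \<pi>k \<pi> q \<partial>\<rho>Q)
       - 2 * sqrt (\<integral>q. ((1 - Mprime rp rm rph rmh Mk q) / Mprime rp rm rph rmh Mk q)\<^sup>2 \<partial>\<rho>Q)
           * sqrt (\<integral>q. (tv_dist (\<pi> q) (\<pi>k q))\<^sup>2 \<partial>\<rho>Q)"
proof -
  define D where "D q = success_prob rstar \<pi> q - success_prob rstar \<pi>k q" for q
  define S where "S q = surrogate rstar rp rm rph rmh Mk \<pi>k \<pi> q" for q
  define M' where "M' q = Mprime rp rm rph rmh Mk q" for q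
  define g where "g q = (1 - M' q) / M' q" for q
  define T where "T q = tv_dist (\<pi> q) (\<pi>k q)" for q
  define A where "A = (\<integral>q. (g q)\<^sup>2 \<partial>\<rho>Q)"
  define B where "B = (\<integral>q. (T q)\<^sup>2 \<partial>\<rho>Q)"
  have iD: "integrable \<rho>Q D" using assms(8) by (simp add: D_def[abs_def])
  have iS: "integrable \<rho>Q S" using assms(9) by (simp add: S_def[abs_def])
  have ig: "integrable \<rho>Q (\<lambda>q. (g q)\<^sup>2)" using assms(10) by (simp add: g_def[abs_def] M'_def[abs_def])
  have iT: "integrable \<rho>Q (\<lambda>q. (T q)\<^sup>2)" using assms(11) by (simp add: T_def[abs_def])
  have M'pos: "M' q > 0" for q using assms(5,6,7)[of q] by (simp add: M'_def Mprime_def)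
  have Tnn: "T q \<ge> 0" for q by (simp add: T_def tv_nonneg)
  have S_eq: "S q = D q / M' q" for q
  proof -
    have "S q = ((rp q - rph q + success_prob rstar \<pi> q * (1 - rp q - rm q)) / (1 - rph q - rmh q)
       - (rp q - rph q + success_prob rstar \<pi>k q * (1 - rp q - rm q)) / (1 - rph q - rmh q)) / Mk q"
      unfolding S_def surrogate_def success_prob_def
      using exp_corr[of rstar q rp rm, OF assms(2) assms(3,4)] by simp
    also have "\<dots> = D q / M' q" unfolding D_def M'_def Mprime_def
      by (rule alg) (use assms(5,6,7)[of q] in auto)
    finally show ?thesis .
  qed
  have DT: "\<bar>D q\<bar> \<le> T q" for q
    unfolding D_def T_def success_prob_def by (rule tv_bound) (use assms(2) in auto)
  have pw: "D q - S q \<ge> - (\<bar>g q\<bar> * T q)" for q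
  proof -
    have "D q - S q = - (D q * g q)" using M'pos[of q] unfolding S_eq g_def by (simp add: field_simps)
    also have "\<dots> \<ge> - (\<bar>g q\<bar> * T q)"
    proof -
      have "D q * g q \<le> \<bar>D q\<bar> * \<bar>g q\<bar>" by (metis abs_ge_self abs_mult)
      moreover have "\<bar>D q\<bar> * \<bar>g q\<bar> \<le> T q * \<bar>g q\<bar>" by (rule mult_right_mono[OF DT abs_ge_zero])
      ultimately show ?thesis by (simp add: mult.commute)
    qed
    finally show ?thesis .
  qed
  have mg: "(\<lambda>q. \<bar>g q\<bar> * T q) \<in> borel_measurable \<rho>Q"
  proof -
    have m1: "(\<lambda>q. (g q)\<^sup>2) \<in> borel_measurable \<rho>Q" using ig by auto
    have m2: "(\<lambda>q. (T q)\<^sup>2) \<in> borel_measurable \<rho>Q" using iT by auto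
    have "(\<lambda>q. sqrt ((g q)\<^sup>2) * sqrt ((T q)\<^sup>2)) \<in> borel_measurable \<rho>Q"
      using borel_measurable_times[OF measurable_compose[OF m1 borel_measurable_sqrt] measurable_compose[OF m2 borel_measurable_sqrt]] .
    moreover have "(\<lambda>q. sqrt ((g q)\<^sup>2) * sqrt ((T q)\<^sup>2)) = (\<lambda>q. \<bar>g q\<bar> * T q)"
      using Tnn by (simp add: fun_eq_iff)
    ultimately show ?thesis by simp
  qed
  have amgm: "\<bar>g q\<bar> * T q \<le> (t * (g q)\<^sup>2 + (T q)\<^sup>2 / t) / 2" if "t > 0" for t q
  proof -
    have "2 * t * (\<bar>g q\<bar> * T q) \<le> t\<^sup>2 * (g q)\<^sup>2 + (T q)\<^sup>2"
    proof -
      have "0 \<le> (t * \<bar>g q\<bar> - T q)\<^sup>2" by simp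
      also have "\<dots> = t\<^sup>2 * (g q)\<^sup>2 - 2 * t * (\<bar>g q\<bar> * T q) + (T q)\<^sup>2"
        by (simp add: power2_diff power_mult_distrib algebra_simps)
      finally show ?thesis by linarith
    qed
    then show ?thesis using that by (simp add: field_simps power2_eq_square)
  qed
  have iX: "integrable \<rho>Q (\<lambda>q. \<bar>g q\<bar> * T q)"
  proof (rule Bochner_Integration.integrable_bound[OF _ mg])
    show "integrable \<rho>Q (\<lambda>q. (1 * (g q)\<^sup>2 + (T q)\<^sup>2 / 1) / 2)" using ig iT by simp
    show "AE x in \<rho>Q. norm (\<bar>g x\<bar> * T x) \<le> norm ((1 * (g x)\<^sup>2 + (T x)\<^sup>2 / 1) / 2)"
      using amgm[of 1] Tnn by (auto simp: abs_mult)
  qed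
  define X where "X = (\<integral>q. \<bar>g q\<bar> * T q \<partial>\<rho>Q)"
  have X0: "X \<ge> 0" unfolding X_def using Tnn by (intro integral_nonneg_AE) auto
  have A0: "A \<ge> 0" unfolding A_def by (intro integral_nonneg_AE) auto
  have B0: "B \<ge> 0" unfolding B_def by (intro integral_nonneg_AE) auto
  have XAB: "X \<le> sqrt A * sqrt B"
  proof (rule sq_bound[OF X0 A0 B0])
    fix t :: real assume tp: "t > 0"
    have "X \<le> (\<integral>q. (t * (g q)\<^sup>2 + (T q)\<^sup>2 / t) / 2 \<partial>\<rho>Q)"
      unfolding X_def by (rule Bochner_Integration.integral_mono[OF iX]) (use ig iT amgm[OF tp] in auto)
    also have "\<dots> = (t * A + B / t) / 2" unfolding A_def B_def using ig iT by simp
    finally show "X \<le> (t * A + B / t) / 2" .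
  qed
  have "(\<integral>q. D q \<partial>\<rho>Q) - (\<integral>q. S q \<partial>\<rho>Q) = (\<integral>q. D q - S q \<partial>\<rho>Q)"
    using iD iS by simp
  also have "\<dots> \<ge> (\<integral>q. - (\<bar>g q\<bar> * T q) \<partial>\<rho>Q)"
    by (rule Bochner_Integration.integral_mono) (use iD iS iX pw in auto)
  finally have "(\<integral>q. D q \<partial>\<rho>Q) - (\<integral>q. S q \<partial>\<rho>Q) \<ge> - X" unfolding X_def by simp
  moreover have "sqrt A * sqrt B \<ge> 0" using A0 B0 by simp
  ultimately have "(\<integral>q. D q \<partial>\<rho>Q) \<ge> (\<integral>q. S q \<partial>\<rho>Q) - 2 * sqrt A * sqrt B" using XAB by linarith
  then show ?thesis
    unfolding D_def S_def A_def B_def g_def M'_def T_def .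
qed

end
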